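(* Let $n\in\mathbb{N}$, $k\geq2$, $u\equiv a_{i_1}a_{i_2}\cdots a_{i_k}$ and $x$ with $x,a_{i_j}\in\{a_1,\dots,a_n\}$, and let $S=sgp^+\langle a_1,\dots,a_n\mid u=x\rangle$, where $\{u=x\}$ is a Gröbner–Shirshov basis. Then $S$ is prefix-automatic.
   Context: $A^*$ is the free monoid (empty word $\varepsilon$), $A^+=A^*\setminus\{\varepsilon\}$. $sgp^+\langle A\mid R\rangle$ is $A^+$ modulo the congruence generated by $R$. Gröbner–Shirshov bases: fix a well-ordering of $A$ and the deg-lex ordering on $A^*$ (length, then lexicographic). For monic polynomials $f,g$ in the free associative algebra $F\langle A\rangle$ over a field with leading words $\bar f,\bar g$: if $w\equiv\bar f b\equiv a\bar g$ with $|\bar f|+|\bar g|>|w|$, $(f,g)_w=fb-ag$; if $w\equiv\bar f\equiv a\bar g b$, $(f,g)_w=f-agb$; trivial modulo $(R,w)$ if it equals $\sum\alpha_i a_i s_i b_i$ with $s_i\in R$, $a_i\bar{s_i}b_i<w$. $R$ is a Gröbner–Shirshov basis if all compositions are trivial; $\{u=x\}$ is one if $\{u-x\}$ is. Automaticity: regular = accepted by a finite automaton. With $\$\notin A$, $A(2,\$)=(A\cup\{\$\})^2\setminus\{(\$,\$)\}$; $(\alpha,\beta)\delta_A^R$ is the word over $A(2,\$)$ obtained by padding the shorter word on the right with $\$$'s and reading letter pairs. For $S$ generated by finite $A$, $\phi:A^+\to S$ canonical, $L\subseteq A^+$ regular with $\phi(L)=S$, write $\alpha=\beta$ if $\phi(\alpha)=\phi(\beta)$,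 and $L_a^\$=\{(\alpha,\beta)\delta^R_A:\alpha,\beta\in L,\alpha a=\beta\}$ for $a\in A\cup\{\varepsilon\}$. $(A,L)$ is an automatic structure if all $L_a^\$$ are regular; $S$ is prefix-automatic if it has an automatic structure $(A,L)$ (for some finite generating set) such that $\{(\alpha,\beta)\delta_A^R:\alpha\in L,\beta\in\mathrm{Pref}(L),\alpha=\beta\}$ is regular, $\mathrm{Pref}(L)$ being the set of prefixes of words of $L$. *)

theory Defs
  imports Main
begin

text \<open>The alphabet a_1,...,a_n is represented by the natural numbers 0,...,n-1
  (a_i corresponds to i-1), well-ordered by the usual order.\<close>

definition alph :: "nat \<Rightarrow> nat set" where
  "alph n = {0..<n}"

definition deglex_less :: "nat list \<Rightarrow> nat list \<Rightarrow> bool" where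
  "deglex_less v w \<longleftrightarrow> (v, w) \<in> lenlex {(a, b). a < (b::nat)}"

definition is_poly :: "nat set \<Rightarrow> (nat list \<Rightarrow> 'k::field) \<Rightarrow> bool" where
  "is_poly A p \<longleftrightarrow> finite {w. p w \<noteq> 0} \<and> {w. p w \<noteq> 0} \<subseteq> lists A"

definition lw :: "(nat list \<Rightarrow> 'k::field) \<Rightarrow> nat list" where
  "lw p = (THE w. p w \<noteq> 0 \<and> (\<forall>v. p v \<noteq> 0 \<longrightarrow> v = w \<or> deglex_less v w))"

definition monic :: "(nat list \<Rightarrow> 'k::field) \<Rightarrow> bool" where
  "monic p \<longleftrightarrow> (\<exists>w. p w \<noteq> 0) \<and> p (lw p) = 1"

definition mmul :: "nat list \<Rightarrow> (nat list \<Rightarrow> 'k::field) \<Rightarrow> nat list \<Rightarrow> (nat list \<Rightarrow> 'k)" where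
  "mmul a p b = (\<lambda>v. if (\<exists>w. v = a @ w @ b)
                      then p (drop (length a) (take (length v - length b) v)) else 0)"

definition binom :: "nat list \<Rightarrow> nat list \<Rightarrow> (nat list \<Rightarrow> 'k::field)" where
  "binom u x = (\<lambda>v. (if v = u then 1 else 0) - (if v = x then 1 else 0))"

definition trivial_mod :: "nat set \<Rightarrow> (nat list \<Rightarrow> 'k::field) set \<Rightarrow> nat list
     \<Rightarrow> (nat list \<Rightarrow> 'k) \<Rightarrow> bool" where
  "trivial_mod A R w h \<longleftrightarrow>
     (\<exists>T c. finite T \<and>
        (\<forall>(a, s, b) \<in> T. a \<in> lists A \<and> b \<in> lists A \<and> s \<in> R \<and> deglex_less (a @ lw s @ b) w) \<and>
        h = (\<lambda>v. \<Sum>t\<in>T. c t * (case t of (a, s, b) \<Rightarrow> mmul a s b v)))"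

definition GS_basis :: "nat set \<Rightarrow> (nat list \<Rightarrow> 'k::field) set \<Rightarrow> bool" where
  "GS_basis A R \<longleftrightarrow>
     (\<forall>f\<in>R. \<forall>g\<in>R.
        (\<forall>a b w. a \<in> lists A \<longrightarrow> b \<in> lists A \<longrightarrow>
           w = lw f @ b \<longrightarrow> w = a @ lw g \<longrightarrow> length (lw f) + length (lw g) > length w \<longrightarrow>
           trivial_mod A R w (\<lambda>v. mmul [] f b v - mmul a g [] v)) \<and>
        (\<forall>a b w. a \<in> lists A \<longrightarrow> b \<in> lists A \<longrightarrow>
           w = lw f \<longrightarrow> w = a @ lw g @ b \<longrightarrow>
           trivial_mod A R w (\<lambda>v. f v - mmul a g b v)))"

text \<open>{u = x} is a Groebner-Shirshov basis iff {u - x} is.\<close>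
definition GS_basis_rel :: "'k::field itself \<Rightarrow> nat set \<Rightarrow> nat list \<Rightarrow> nat list \<Rightarrow> bool" where
  "GS_basis_rel _ A u x \<longleftrightarrow> GS_basis A {binom u x :: nat list \<Rightarrow> 'k}"

definition rstep :: "(nat list \<times> nat list) set \<Rightarrow> (nat list \<times> nat list) set" where
  "rstep R = {(p @ l @ q, p @ r @ q) | p q l r. (l, r) \<in> R}"

definition cong_gen :: "(nat list \<times> nat list) set \<Rightarrow> (nat list \<times> nat list) set" where
  "cong_gen R = (rstep R \<union> (rstep R)\<inverse>)\<^sup>*"

definition regular :: "'c set \<Rightarrow> 'c list set \<Rightarrow> bool" where
  "regular \<Sigma> L \<longleftrightarrow>
     (\<exists>(Q :: nat set) (\<delta> :: nat \<Rightarrow> 'c \<Rightarrow> nat) q0 F.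
        finite Q \<and> q0 \<in> Q \<and> (\<forall>q\<in>Q. \<forall>c\<in>\<Sigma>. \<delta> q c \<in> Q) \<and>
        L = {w \<in> lists \<Sigma>. foldl \<delta> q0 w \<in> F})"

text \<open>A(2,$), with $ represented by None.\<close>
definition pad_alph :: "'c set \<Rightarrow> ('c option \<times> 'c option) set" where
  "pad_alph B = {(p, q). p \<in> Some ` B \<union> {None} \<and> q \<in> Some ` B \<union> {None} \<and> (p, q) \<noteq> (None, None)}"

definition pad :: "'c list \<Rightarrow> 'c list \<Rightarrow> ('c option \<times> 'c option) list" where
  "pad \<alpha> \<beta> = zip (map Some \<alpha> @ replicate (length \<beta> - length \<alpha>) None)
                 (map Some \<beta> @ replicate (length \<alpha> - length \<beta>) None)"

definition Pref :: "'c list set \<Rightarrow> 'c list set" where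
  "Pref L = {p. \<exists>w\<in>L. \<exists>s. w = p @ s}"

text \<open>A finite generating set of S = sgp+<A|R> is an alphabet {0..<m} together with a map
  g assigning to each generator a representative nonempty word over A; the canonical map
  phi sends a generator word beta to the class of concat (map g beta).\<close>

definition eqS :: "(nat list \<times> nat list) set \<Rightarrow> (nat \<Rightarrow> nat list) \<Rightarrow> nat list \<Rightarrow> nat list \<Rightarrow> bool" where
  "eqS R g \<alpha> \<beta> \<longleftrightarrow> \<alpha> \<noteq> [] \<and> \<beta> \<noteq> [] \<and> (concat (map g \<alpha>), concat (map g \<beta>)) \<in> cong_gen R"

definition automatic_structure ::
  "nat set \<Rightarrow> (nat list \<times> nat list) set \<Rightarrow> nat \<Rightarrow> (nat \<Rightarrow> nat list) \<Rightarrow> nat list set \<Rightarrow> bool" where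
  "automatic_structure A R m g L \<longleftrightarrow>
     (\<forall>i<m. g i \<in> lists A \<and> g i \<noteq> []) \<and>
     regular {0..<m} L \<and> L \<subseteq> lists {0..<m} - {[]} \<and>
     (\<forall>w\<in>lists A - {[]}. \<exists>\<alpha>\<in>L. (concat (map g \<alpha>), w) \<in> cong_gen R) \<and>
     (\<forall>a\<in>{[]} \<union> {[i] | i. i < m}.
        regular (pad_alph {0..<m}) {pad \<alpha> \<beta> | \<alpha> \<beta>. \<alpha> \<in> L \<and> \<beta> \<in> L \<and> eqS R g (\<alpha> @ a) \<beta>})"

definition prefix_automatic :: "nat set \<Rightarrow> (nat list \<times> nat list) set \<Rightarrow> bool" where
  "prefix_automatic A R \<longleftrightarrow>
     (\<exists>m g L. automatic_structure A R m g L \<and>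
        regular (pad_alph {0..<m}) {pad \<alpha> \<beta> | \<alpha> \<beta>. \<alpha> \<in> L \<and> \<beta> \<in> Pref L \<and> eqS R g \<alpha> \<beta>})"

end

theory Submission
  imports Defs
begin


lemma foldl_in:
  assumes "\<forall>q\<in>Q. \<forall>c\<in>\<Sigma>. \<delta> q c \<in> Q" "q \<in> Q" "w \<in> lists \<Sigma>"
  shows "foldl \<delta> q w \<in> Q"
  using assms(2,3)
proof (induction w arbitrary: q)
  case Nil then show ?case by simp
next
  case (Cons c w) then show ?case using assms(1) by simp
qed

lemma regular_st:
  fixes \<Sigma> :: "'c set" and st :: "'c list \<Rightarrow> 'b"
  assumes fin: "finite (st ` lists \<Sigma>)"
   and stp: "\<And>w c. w \<in> lists \<Sigma> \<Longrightarrow> c \<in> \<Sigma> \<Longrightarrow> st (w @ [c]) = \<delta> (st w) c"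
   and acc: "\<And>w. w \<in> lists \<Sigma> \<Longrightarrow> (w \<in> L \<longleftrightarrow> P (st w))"
   and sub: "L \<subseteq> lists \<Sigma>"
  shows "regular \<Sigma> L"
proof -
  let ?I = "st ` lists \<Sigma>"
  obtain f :: "'b \<Rightarrow> nat" and N where f: "f ` ?I = {i. i < N}" "inj_on f ?I"
    using finite_imp_inj_to_nat_seg[OF fin] by blast
  define d where "d q c = f (\<delta> (inv_into ?I f q) c)" for q c
  have fold: "foldl d (f (st [])) w = f (st w)" if "w \<in> lists \<Sigma>" for w
    using that
  proof (induction w rule: rev_induct)
    case Nil then show ?case by simp
  next
    case (snoc c w)
    then have w: "w \<in> lists \<Sigma>" and c: "c \<in> \<Sigma>" by auto
    have "foldl d (f (st [])) (w @ [c]) = d (f (st w)) c" using snoc w by simp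
    also have "\<dots> = f (\<delta> (st w) c)" unfolding d_def using f(2) w by (simp add: inv_into_f_f)
    also have "\<dots> = f (st (w @ [c]))" using stp[OF w c] by simp
    finally show ?case .
  qed
  show ?thesis unfolding regular_def
  proof (intro exI conjI)
    show "finite (f ` ?I)" using fin by simp
    show "f (st []) \<in> f ` ?I" by auto
    show "\<forall>q\<in>f ` ?I. \<forall>c\<in>\<Sigma>. d q c \<in> f ` ?I"
    proof (intro ballI)
      fix q c assume q: "q \<in> f ` ?I" and c: "c \<in> \<Sigma>"
      then obtain w where w: "w \<in> lists \<Sigma>" and qw: "q = f (st w)" by auto
      have "d q c = f (st (w @ [c]))" unfolding d_def qw using f(2) w stp[OF w c]
        by (simp add: inv_into_f_f)
      then show "d q c \<in> f ` ?I" using w c by auto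
    qed
    show "L = {w \<in> lists \<Sigma>. foldl d (f (st [])) w \<in> f ` {z \<in> ?I. P z}}"
    proof (intro set_eqI iffI)
      fix w assume wL: "w \<in> L"
      then have w: "w \<in> lists \<Sigma>" using sub by auto
      then have "P (st w)" using acc wL by auto
      then have fw: "f (st w) \<in> f ` {z \<in> ?I. P z}" using w by blast
      have "foldl d (f (st [])) w = f (st w)" by (rule fold[OF w])
      with fw have "foldl d (f (st [])) w \<in> f ` {z \<in> ?I. P z}" by (simp only:)
      then show "w \<in> {w \<in> lists \<Sigma>. foldl d (f (st [])) w \<in> f ` {z \<in> ?I. P z}}"
        using w by blast
    next
      fix w assume wm: "w \<in> {w \<in> lists \<Sigma>. foldl d (f (st [])) w \<in> f ` {z \<in> ?I. P z}}"
      then have w: "w \<in> lists \<Sigma>" and fm: "foldl d (f (st [])) w \<in> f ` {z \<in> ?I. P z}" by blast+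
      have "foldl d (f (st [])) w = f (st w)" by (rule fold[OF w])
      with fm have "f (st w) \<in> f ` {z \<in> ?I. P z}" by (simp only:)
      then obtain z where "z \<in> ?I" "P z" "f (st w) = f z" by blast
      then have "st w = z" using f(2) w inj_onD by fastforce
      then show "w \<in> L" using acc[OF w] \<open>P z\<close> by simp
    qed
  qed
qed

lemma regularE:
  assumes "regular \<Sigma> L"
  obtains Q :: "nat set" and \<delta> :: "nat \<Rightarrow> 'c \<Rightarrow> nat" and q0 :: nat and F :: "nat set" where "finite Q" "q0 \<in> Q" "\<forall>q\<in>Q. \<forall>c\<in>\<Sigma>. \<delta> q c \<in> Q"
    "L = {w \<in> lists \<Sigma>. foldl \<delta> q0 w \<in> F}"
proof -
  from assms obtain Q :: "nat set" and \<delta> :: "nat \<Rightarrow> 'c \<Rightarrow> nat" and q0 F where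
    "finite Q \<and> q0 \<in> Q \<and> (\<forall>q\<in>Q. \<forall>c\<in>\<Sigma>. \<delta> q c \<in> Q) \<and> L = {w \<in> lists \<Sigma>. foldl \<delta> q0 w \<in> F}"
    unfolding regular_def by (elim exE) assumption
  then show ?thesis by (elim conjE) (rule that; assumption)
qed

lemma regular_inter:
  assumes "regular \<Sigma> L1" "regular \<Sigma> L2"
  shows "regular \<Sigma> (L1 \<inter> L2)"
proof -
  obtain Q1 :: "nat set" and d1 q1 F1 where A: "finite Q1" "q1 \<in> Q1" "\<forall>q\<in>Q1. \<forall>c\<in>\<Sigma>. d1 q c \<in> Q1"
    "L1 = {w \<in> lists \<Sigma>. foldl d1 q1 w \<in> F1}" by (rule regularE[OF assms(1)])
  obtain Q2 :: "nat set" and d2 q2 F2 where B: "finite Q2" "q2 \<in> Q2" "\<forall>q\<in>Q2. \<forall>c\<in>\<Sigma>. d2 q c \<in> Q2"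
    "L2 = {w \<in> lists \<Sigma>. foldl d2 q2 w \<in> F2}" by (rule regularE[OF assms(2)])
  show ?thesis
  proof (rule regular_st[where st = "\<lambda>w. (foldl d1 q1 w, foldl d2 q2 w)"
        and \<delta> = "\<lambda>(a,b) c. (d1 a c, d2 b c)" and P = "\<lambda>(a,b). a \<in> F1 \<and> b \<in> F2"])
    show "finite ((\<lambda>w. (foldl d1 q1 w, foldl d2 q2 w)) ` lists \<Sigma>)"
    proof (rule finite_subset[of _ "Q1 \<times> Q2"])
      show "(\<lambda>w. (foldl d1 q1 w, foldl d2 q2 w)) ` lists \<Sigma> \<subseteq> Q1 \<times> Q2"
        using A(2,3) B(2,3) foldl_in[of Q1 \<Sigma> d1 q1] foldl_in[of Q2 \<Sigma> d2 q2] by blast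
    qed (use A(1) B(1) in simp)
  next
    show "L1 \<inter> L2 \<subseteq> lists \<Sigma>" using A(4) B(4) by blast
  qed (use A(4) B(4) in simp_all)
qed

lemma regular_union:
  assumes "regular \<Sigma> L1" "regular \<Sigma> L2"
  shows "regular \<Sigma> (L1 \<union> L2)"
proof -
  obtain Q1 :: "nat set" and d1 q1 F1 where A: "finite Q1" "q1 \<in> Q1" "\<forall>q\<in>Q1. \<forall>c\<in>\<Sigma>. d1 q c \<in> Q1"
    "L1 = {w \<in> lists \<Sigma>. foldl d1 q1 w \<in> F1}" by (rule regularE[OF assms(1)])
  obtain Q2 :: "nat set" and d2 q2 F2 where B: "finite Q2" "q2 \<in> Q2" "\<forall>q\<in>Q2. \<forall>c\<in>\<Sigma>. d2 q c \<in> Q2"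
    "L2 = {w \<in> lists \<Sigma>. foldl d2 q2 w \<in> F2}" by (rule regularE[OF assms(2)])
  show ?thesis
  proof (rule regular_st[where st = "\<lambda>w. (foldl d1 q1 w, foldl d2 q2 w)"
        and \<delta> = "\<lambda>(a,b) c. (d1 a c, d2 b c)" and P = "\<lambda>(a,b). a \<in> F1 \<or> b \<in> F2"])
    show "finite ((\<lambda>w. (foldl d1 q1 w, foldl d2 q2 w)) ` lists \<Sigma>)"
    proof (rule finite_subset[of _ "Q1 \<times> Q2"])
      show "(\<lambda>w. (foldl d1 q1 w, foldl d2 q2 w)) ` lists \<Sigma> \<subseteq> Q1 \<times> Q2"
        using A(2,3) B(2,3) foldl_in[of Q1 \<Sigma> d1 q1] foldl_in[of Q2 \<Sigma> d2 q2] by blast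
    qed (use A(1) B(1) in simp)
  next
    show "L1 \<union> L2 \<subseteq> lists \<Sigma>" using A(4) B(4) by blast
  qed (use A(4) B(4) in simp_all)
qed

lemma regular_preimage:
  assumes "regular \<Sigma> L" "\<forall>c\<in>\<Sigma>'. h c \<in> lists \<Sigma>"
  shows "regular \<Sigma>' {p \<in> lists \<Sigma>'. concat (map h p) \<in> L}"
proof -
  obtain Q :: "nat set" and d q0 F where A: "finite Q" "q0 \<in> Q" "\<forall>q\<in>Q. \<forall>c\<in>\<Sigma>. d q c \<in> Q"
    "L = {w \<in> lists \<Sigma>. foldl d q0 w \<in> F}" by (rule regularE[OF assms(1)])
  have cl: "p \<in> lists \<Sigma>' \<Longrightarrow> concat (map h p) \<in> lists \<Sigma>" for p
    using assms(2) by (induction p) auto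
  show ?thesis
  proof (rule regular_st[where st = "\<lambda>p. foldl d q0 (concat (map h p))"
        and \<delta> = "\<lambda>a c. foldl d a (h c)" and P = "\<lambda>a. a \<in> F"])
    show "finite ((\<lambda>p. foldl d q0 (concat (map h p))) ` lists \<Sigma>')"
    proof (rule finite_subset[of _ Q])
      show "(\<lambda>p. foldl d q0 (concat (map h p))) ` lists \<Sigma>' \<subseteq> Q"
        using A(2,3) foldl_in[of Q \<Sigma> d q0] cl by blast
    qed (use A(1) in simp)
  qed (use A(4) cl in auto)
qed

lemma regular_empty: "regular \<Sigma> {}"
  by (rule regular_st[where st = "\<lambda>_. ()" and \<delta> = "\<lambda>_ _. ()" and P = "\<lambda>_. False"]) auto

lemma regular_lists:
  assumes "D \<subseteq> \<Sigma>"
  shows "regular \<Sigma> (lists D)"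
  by (rule regular_st[where st = "\<lambda>w. w \<in> lists D" and \<delta> = "\<lambda>b c. b \<and> c \<in> D" and P = "\<lambda>b. b"])
    (use assms in auto)

lemma regular_single:
  assumes "c \<in> \<Sigma>"
  shows "regular \<Sigma> {[c]}"
proof (rule regular_st[where st = "\<lambda>w. (w = [], w = [c])"
      and \<delta> = "\<lambda>(e, s) d. (False, e \<and> d = c)" and P = "\<lambda>(e, s). s"])
  show "finite ((\<lambda>w. (w = [], w = [c])) ` lists \<Sigma>)"
    by (rule finite_subset[of _ UNIV]) simp_all
next
  fix w d show "(w @ [d] = [], w @ [d] = [c]) = (\<lambda>(e, s) d. (False, e \<and> d = c)) (w = [], w = [c]) d"
    by (cases w) simp_all
next
  fix w show "(w \<in> {[c]}) = (case (w = [], w = [c]) of (e, s) \<Rightarrow> s)" by simp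
next
  show "{[c]} \<subseteq> lists \<Sigma>" using assms by simp
qed


lemma regular_concat:
  assumes "regular \<Sigma> L1" "regular \<Sigma> L2"
  shows "regular \<Sigma> {a @ b | a b. a \<in> L1 \<and> b \<in> L2}"
proof -
  obtain Q1 :: "nat set" and d1 q1 F1 where A: "finite Q1" "q1 \<in> Q1" "\<forall>q\<in>Q1. \<forall>c\<in>\<Sigma>. d1 q c \<in> Q1"
    "L1 = {w \<in> lists \<Sigma>. foldl d1 q1 w \<in> F1}" by (rule regularE[OF assms(1)])
  obtain Q2 :: "nat set" and d2 q2 F2 where B: "finite Q2" "q2 \<in> Q2" "\<forall>q\<in>Q2. \<forall>c\<in>\<Sigma>. d2 q c \<in> Q2"
    "L2 = {w \<in> lists \<Sigma>. foldl d2 q2 w \<in> F2}" by (rule regularE[OF assms(2)])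
  define S where "S p = {foldl d2 q2 s | q s. p = q @ s \<and> q \<in> L1}" for p
  have Ssub: "S p \<subseteq> Q2" if "p \<in> lists \<Sigma>" for p
  proof
    fix z assume "z \<in> S p"
    then obtain q s where "z = foldl d2 q2 s" "p = q @ s" unfolding S_def by blast
    then have "s \<in> lists \<Sigma>" using that by simp
    then show "z \<in> Q2" using B(2,3) foldl_in[of Q2 \<Sigma> d2 q2 s] \<open>z = foldl d2 q2 s\<close> by simp
  qed
  have Sstep: "S (p @ [c]) = (\<lambda>z. d2 z c) ` S p \<union> (if p @ [c] \<in> L1 then {q2} else {})"
    for p c
  proof (intro set_eqI iffI)
    fix z assume "z \<in> S (p @ [c])"
    then obtain q s where z: "z = foldl d2 q2 s" and e: "p @ [c] = q @ s" and q: "q \<in> L1"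
      unfolding S_def by blast
    show "z \<in> (\<lambda>z. d2 z c) ` S p \<union> (if p @ [c] \<in> L1 then {q2} else {})"
    proof (cases s rule: rev_cases)
      case Nil then show ?thesis using z e q by simp
    next
      case (snoc s' c')
      then have "p @ [c] = (q @ s') @ [c']" using e by simp
      then have "p = q @ s' \<and> c = c'" by (simp only: append1_eq_conv)
      then have "c' = c" "p = q @ s'" by simp_all
      then have "foldl d2 q2 s' \<in> S p" unfolding S_def using q by blast
      then show ?thesis using z snoc \<open>c' = c\<close> by auto
    qed
  next
    fix z assume z: "z \<in> (\<lambda>z. d2 z c) ` S p \<union> (if p @ [c] \<in> L1 then {q2} else {})"
    show "z \<in> S (p @ [c])"
    proof (cases "z \<in> (\<lambda>z. d2 z c) ` S p")
      case True
      then obtain q s where "z = d2 (foldl d2 q2 s) c" "p = q @ s" "q \<in> L1"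
        unfolding S_def by blast
      then have "z = foldl d2 q2 (s @ [c]) \<and> p @ [c] = q @ (s @ [c]) \<and> q \<in> L1" by simp
      then show ?thesis unfolding S_def by blast
    next
      case False
      then have "z = q2" "p @ [c] \<in> L1" using z by (auto split: if_splits)
      then have "z = foldl d2 q2 [] \<and> p @ [c] = (p @ [c]) @ [] \<and> p @ [c] \<in> L1" by simp
      then show ?thesis unfolding S_def by blast
    qed
  qed
  show ?thesis
  proof (rule regular_st[where st = "\<lambda>p. (foldl d1 q1 p, S p)"
        and \<delta> = "\<lambda>(a,Z) c. (d1 a c, (\<lambda>z. d2 z c) ` Z \<union> (if d1 a c \<in> F1 then {q2} else {}))"
        and P = "\<lambda>(a,Z). Z \<inter> F2 \<noteq> {}"])
    show "finite ((\<lambda>p. (foldl d1 q1 p, S p)) ` lists \<Sigma>)"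
    proof (rule finite_subset[of _ "Q1 \<times> Pow Q2"])
      show "(\<lambda>p. (foldl d1 q1 p, S p)) ` lists \<Sigma> \<subseteq> Q1 \<times> Pow Q2"
        using A(2,3) foldl_in[of Q1 \<Sigma> d1 q1] Ssub by blast
    qed (use A B in simp)
  next
    fix w c assume w: "w \<in> lists \<Sigma>" and c: "c \<in> \<Sigma>"
    have "(w @ [c] \<in> L1) = (d1 (foldl d1 q1 w) c \<in> F1)" using A(4) w c by simp
    then show "(foldl d1 q1 (w @ [c]), S (w @ [c])) =
      (\<lambda>(a,Z) c. (d1 a c, (\<lambda>z. d2 z c) ` Z \<union> (if d1 a c \<in> F1 then {q2} else {}))) (foldl d1 q1 w, S w) c"
      using Sstep[of w c] by simp
  next
    fix w assume w: "w \<in> lists \<Sigma>"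
    show "(w \<in> {a @ b | a b. a \<in> L1 \<and> b \<in> L2}) = (case (foldl d1 q1 w, S w) of (a, Z) \<Rightarrow> Z \<inter> F2 \<noteq> {})"
    proof
      assume "w \<in> {a @ b | a b. a \<in> L1 \<and> b \<in> L2}"
      then obtain a b where "w = a @ b" "a \<in> L1" "b \<in> L2" by blast
      then have "foldl d2 q2 b \<in> S w \<inter> F2" unfolding S_def using B(4) by blast
      then show "(case (foldl d1 q1 w, S w) of (a, Z) \<Rightarrow> Z \<inter> F2 \<noteq> {})" by auto
    next
      assume "(case (foldl d1 q1 w, S w) of (a, Z) \<Rightarrow> Z \<inter> F2 \<noteq> {})"
      then obtain z where "z \<in> S w" "z \<in> F2" by auto
      then obtain a b where "z = foldl d2 q2 b" "w = a @ b" "a \<in> L1" unfolding S_def by blast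
      moreover have "b \<in> lists \<Sigma>" using w \<open>w = a @ b\<close> by simp
      ultimately show "w \<in> {a @ b | a b. a \<in> L1 \<and> b \<in> L2}" using B(4) \<open>z \<in> F2\<close> by blast
    qed
  next
    show "{a @ b | a b. a \<in> L1 \<and> b \<in> L2} \<subseteq> lists \<Sigma>" using A B by auto
  qed
qed



definition S1 :: "nat list \<Rightarrow> nat \<Rightarrow> (nat list \<times> nat list) set" where
  "S1 u x = rstep {(u, [x])}"

definition irr :: "nat list \<Rightarrow> nat list \<Rightarrow> bool" where
  "irr u v \<longleftrightarrow> (\<forall>p q. v \<noteq> p @ u @ q)"

definition NFs :: "nat list \<Rightarrow> nat \<Rightarrow> nat list \<Rightarrow> nat list set" where
  "NFs u x v = {n. (v, n) \<in> (S1 u x)\<^sup>* \<and> irr u n}"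

definition E :: "nat list \<Rightarrow> nat \<Rightarrow> nat list \<Rightarrow> (nat list \<times> nat list) set" where
  "E u x w = {(a, b). ((a, b) \<in> S1 u x \<or> (b, a) \<in> S1 u x) \<and> deglex_less a w \<and> deglex_less b w}"

lemma S1_iff: "(a, b) \<in> S1 u x \<longleftrightarrow> (\<exists>p q. a = p @ u @ q \<and> b = p @ [x] @ q)"
  unfolding S1_def rstep_def by blast

lemma S1_len: "(a, b) \<in> S1 u x \<Longrightarrow> length u \<ge> 2 \<Longrightarrow> length b < length a"
  unfolding S1_iff by auto

lemma S1_ctx: "(a, b) \<in> S1 u x \<Longrightarrow> (P @ a @ Q, P @ b @ Q) \<in> S1 u x"
  unfolding S1_iff by (metis append.assoc)

lemma irr_iff: "irr u v \<longleftrightarrow> (\<forall>b. (v, b) \<notin> S1 u x)"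
  unfolding irr_def S1_iff by blast

lemma deglex_shorter: "length v < length w \<Longrightarrow> deglex_less v w"
  unfolding deglex_less_def lenlex_conv by simp

lemma deglex_len: "deglex_less v w \<Longrightarrow> length v \<le> length w"
  unfolding deglex_less_def lenlex_conv by auto

lemma deglex_ctx: "deglex_less v w \<Longrightarrow> deglex_less (P @ v @ Q) (P @ w @ Q)"
  unfolding deglex_less_def lenlex_conv
  by (auto intro: lex_append_leftI lex_append_rightI)

lemma app_split:
  assumes "xs @ ys = zs @ ts" "length xs \<le> length zs"
  shows "\<exists>us. zs = xs @ us \<and> ys = us @ ts"
proof -
  have "xs = take (length xs) zs \<and> ys = drop (length xs) zs @ ts"
    using assms by (simp add: append_eq_append_conv_if)
  then show ?thesis by (metis append_take_drop_id)
qed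

lemma E_sym: "(a, b) \<in> E u x w \<Longrightarrow> (b, a) \<in> E u x w"
  unfolding E_def by auto

lemma E_rtrancl_sym: "(a, b) \<in> (E u x w)\<^sup>* \<Longrightarrow> (b, a) \<in> (E u x w)\<^sup>*"
proof (induction rule: rtrancl_induct)
  case base then show ?case by simp
next
  case (step y z)
  from step(2) have "(z, y) \<in> E u x w" by (rule E_sym)
  then show ?case using step(3) by (rule converse_rtrancl_into_rtrancl)
qed

lemma E_ctx: "(a, b) \<in> (E u x w)\<^sup>* \<Longrightarrow> (P @ a @ Q, P @ b @ Q) \<in> (E u x (P @ w @ Q))\<^sup>*"
proof (induction rule: rtrancl_induct)
  case base then show ?case by simp
next
  case (step y z)
  have "(P @ y @ Q, P @ z @ Q) \<in> E u x (P @ w @ Q)"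
    using step(2) unfolding E_def by (auto intro: S1_ctx deglex_ctx)
  then show ?case by (rule rtrancl_into_rtrancl[OF step(3)])
qed

lemma NFs_nonempty:
  assumes "length u \<ge> 2"
  shows "NFs u x v \<noteq> {}"
proof (induction v rule: measure_induct_rule[where f = length])
  case (less v)
  show ?case
  proof (cases "irr u v")
    case True then show ?thesis unfolding NFs_def by blast
  next
    case False
    then obtain b where b: "(v, b) \<in> S1 u x" using irr_iff by blast
    then have "length b < length v" using S1_len assms by blast
    then obtain n where "n \<in> NFs u x b" using less by blast
    then have "n \<in> NFs u x v" unfolding NFs_def using b by (blast intro: converse_rtrancl_into_rtrancl)
    then show ?thesis by blast
  qed
qed

lemma NFs_step: "(a, b) \<in> S1 u x \<Longrightarrow> NFs u x b \<subseteq> NFs u x a"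
  unfolding NFs_def by (blast intro: converse_rtrancl_into_rtrancl)

definition UNF :: "nat list \<Rightarrow> nat \<Rightarrow> nat list \<Rightarrow> bool" where
  "UNF u x v \<longleftrightarrow> (\<forall>n1 n2. n1 \<in> NFs u x v \<longrightarrow> n2 \<in> NFs u x v \<longrightarrow> n1 = n2)"

lemma NFs_step_eq:
  assumes "(a, b) \<in> S1 u x" "UNF u x a" "length u \<ge> 2"
  shows "NFs u x b = NFs u x a"
proof -
  have sub: "NFs u x b \<subseteq> NFs u x a" by (rule NFs_step[OF assms(1)])
  obtain n where n: "n \<in> NFs u x b" using NFs_nonempty[OF assms(3)] by blast
  show ?thesis
  proof
    show "NFs u x a \<subseteq> NFs u x b"
    proof
      fix m assume "m \<in> NFs u x a"
      then have "m = n" using assms(2) sub n unfolding UNF_def by blast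
      then show "m \<in> NFs u x b" using n by simp
    qed
  qed (rule sub)
qed

lemma conv_NFs:
  assumes "(a, b) \<in> (E u x w)\<^sup>*" "\<And>z. deglex_less z w \<Longrightarrow> UNF u x z" "length u \<ge> 2"
  shows "NFs u x a = NFs u x b"
  using assms(1)
proof (induction rule: rtrancl_induct)
  case base then show ?case by simp
next
  case (step y z)
  then have yz: "(y, z) \<in> S1 u x \<or> (z, y) \<in> S1 u x" "deglex_less y w" "deglex_less z w"
    unfolding E_def by auto
  have "NFs u x y = NFs u x z"
  proof (cases "(y, z) \<in> S1 u x")
    case True then show ?thesis using NFs_step_eq[OF True assms(2)[OF yz(2)] assms(3)] by simp
  next
    case False
    then have "(z, y) \<in> S1 u x" using yz(1) by simp
    then show ?thesis using NFs_step_eq[OF _ assms(2)[OF yz(3)] assms(3)] by simp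
  qed
  then show ?case using step(3) by simp
qed


lemma peak:
  assumes k2: "length u \<ge> 2"
    and ov: "\<And>p q. u @ q = p @ u \<Longrightarrow> 0 < length p \<Longrightarrow> length p < length u \<Longrightarrow>
               (x # q, p @ [x]) \<in> (E u x (u @ q))\<^sup>*"
    and eq: "P1 @ u @ Q1 = P2 @ u @ Q2" and le: "length P1 \<le> length P2"
  shows "(P1 @ [x] @ Q1, P2 @ [x] @ Q2) \<in> (E u x (P1 @ u @ Q1))\<^sup>*"
proof -
  obtain d where d: "P2 = P1 @ d" "u @ Q1 = d @ u @ Q2"
    using app_split[of P1 "u @ Q1" P2 "u @ Q2"] eq le by blast
  consider "d = []" | "0 < length d" "length d < length u" | "length u \<le> length d"
    by (cases "d = []"; cases "length d < length u") auto
  then show ?thesis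
  proof cases
    case 1 then show ?thesis using d by simp
  next
    case 2
    have "u @ Q1 = (d @ u) @ Q2" using d by simp
    then obtain us where us: "d @ u = u @ us" "Q1 = us @ Q2"
      using app_split[of u Q1 "d @ u" Q2] by auto
    have "(x # us, d @ [x]) \<in> (E u x (u @ us))\<^sup>*"
      using ov[of us d] us(1) 2 by simp
    from E_ctx[OF this, of P1 Q2]
    show ?thesis using us d by simp
  next
    case 3
    have "u @ Q1 = d @ (u @ Q2)" using d by simp
    then obtain M where M: "d = u @ M" "Q1 = M @ u @ Q2"
      using app_split[of u Q1 d "u @ Q2"] 3 by auto
    let ?w = "P1 @ u @ Q1"
    let ?v1 = "P1 @ [x] @ M @ u @ Q2"
    let ?v2 = "P1 @ u @ M @ [x] @ Q2"
    let ?z = "P1 @ [x] @ M @ [x] @ Q2"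
    have s1: "(?v1, ?z) \<in> S1 u x" unfolding S1_iff
      by (rule exI[of _ "P1 @ [x] @ M"], rule exI[of _ Q2]) simp
    have s2: "(?v2, ?z) \<in> S1 u x" unfolding S1_iff
      by (rule exI[of _ P1], rule exI[of _ "M @ [x] @ Q2"]) simp
    have l1: "deglex_less ?v1 ?w" "deglex_less ?v2 ?w" "deglex_less ?z ?w"
      using k2 M by (auto intro!: deglex_shorter)
    have e1: "(?v1, ?z) \<in> E u x ?w" using s1 l1 unfolding E_def by blast
    have e2: "(?z, ?v2) \<in> E u x ?w" using s2 l1 unfolding E_def by blast
    have "(?v1, ?v2) \<in> (E u x ?w)\<^sup>*" using e1 e2 by (meson r_into_rtrancl rtrancl_into_rtrancl)
    then show ?thesis using M d by simp
  qed
qed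

lemma all_UNF:
  assumes k2: "length u \<ge> 2"
    and ov: "\<And>p q. u @ q = p @ u \<Longrightarrow> 0 < length p \<Longrightarrow> length p < length u \<Longrightarrow>
               (x # q, p @ [x]) \<in> (E u x (u @ q))\<^sup>*"
  shows "UNF u x w"
proof (induction w rule: wf_induct_rule[OF wf_lenlex[OF wf_less]])
  case (1 w)
  have IH: "\<And>z. deglex_less z w \<Longrightarrow> UNF u x z"
    using 1 unfolding deglex_less_def by blast
  show ?case unfolding UNF_def
  proof (intro allI impI)
    fix n1 n2 assume n1: "n1 \<in> NFs u x w" and n2: "n2 \<in> NFs u x w"
    show "n1 = n2"
    proof (cases "irr u w")
      case True
      have "n = w" if "n \<in> NFs u x w" for n
      proof -
        have "(w, n) \<in> (S1 u x)\<^sup>*" using that unfolding NFs_def by blast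
        then show ?thesis
        proof (rule converse_rtranclE)
          fix y assume "(w, y) \<in> S1 u x"
          then show "n = w" using True irr_iff by blast
        qed simp
      qed
      then show ?thesis using n1 n2 by metis
    next
      case False
      have get: "\<exists>v. (w, v) \<in> S1 u x \<and> n \<in> NFs u x v" if "n \<in> NFs u x w" for n
      proof -
        have r: "(w, n) \<in> (S1 u x)\<^sup>*" and ir: "irr u n" using that unfolding NFs_def by blast+
        from r show ?thesis
        proof (rule converse_rtranclE)
          assume "w = n" then show ?thesis using False ir by simp
        next
          fix y assume "(w, y) \<in> S1 u x" "(y, n) \<in> (S1 u x)\<^sup>*"
          then show ?thesis using ir unfolding NFs_def by blast
        qed
      qed
      obtain v1 where v1: "(w, v1) \<in> S1 u x" "n1 \<in> NFs u x v1" using get[OF n1] by blast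
      obtain v2 where v2: "(w, v2) \<in> S1 u x" "n2 \<in> NFs u x v2" using get[OF n2] by blast
      obtain P1 Q1 where pq1: "w = P1 @ u @ Q1" "v1 = P1 @ [x] @ Q1" using v1(1) S1_iff by blast
      obtain P2 Q2 where pq2: "w = P2 @ u @ Q2" "v2 = P2 @ [x] @ Q2" using v2(1) S1_iff by blast
      have conv: "(v1, v2) \<in> (E u x w)\<^sup>*"
      proof (cases "length P1 \<le> length P2")
        case True
        then show ?thesis using peak[OF k2 ov, of P1 Q1 P2 Q2] pq1 pq2 by simp
      next
        case False
        then have "(v2, v1) \<in> (E u x w)\<^sup>*" using peak[OF k2 ov, of P2 Q2 P1 Q1] pq1 pq2 by simp
        then show ?thesis by (rule E_rtrancl_sym)
      qed
      have "NFs u x v1 = NFs u x v2" by (rule conv_NFs[OF conv IH k2])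
      moreover have "deglex_less v1 w" using S1_len[OF v1(1) k2] by (rule deglex_shorter)
      ultimately show ?thesis using IH v1(2) v2(2) unfolding UNF_def by blast
    qed
  qed
qed

lemma cong_NFs:
  assumes k2: "length u \<ge> 2" and all: "\<And>w. UNF u x w"
    and c: "(a, b) \<in> cong_gen {(u, [x])}"
  shows "NFs u x a = NFs u x b"
proof -
  have c': "(a, b) \<in> (S1 u x \<union> (S1 u x)\<inverse>)\<^sup>*" using c unfolding cong_gen_def S1_def .
  then show ?thesis
  proof (induction rule: rtrancl_induct)
    case base then show ?case by simp
  next
    case (step y z)
    have "NFs u x y = NFs u x z"
    proof (cases "(y, z) \<in> S1 u x")
      case True then show ?thesis using NFs_step_eq[OF True all k2] by simp
    next
      case False
      then have "(z, y) \<in> S1 u x" using step(2) by auto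
      then show ?thesis using NFs_step_eq[OF _ all k2] by simp
    qed
    then show ?case using step(3) by simp
  qed
qed


lemma mmul_binom:
  "mmul a (binom u y :: nat list \<Rightarrow> 'k::field) b v =
     (if v = a @ u @ b then 1 else 0) - (if v = a @ y @ b then 1 else 0)"
proof (cases "\<exists>w. v = a @ w @ b")
  case True
  then obtain w where w: "v = a @ w @ b" by blast
  have "drop (length a) (take (length v - length b) v) = w" using w by simp
  then show ?thesis unfolding mmul_def binom_def using w by simp
next
  case False
  then have "v \<noteq> a @ u @ b" "v \<noteq> a @ y @ b" by blast+
  then show ?thesis unfolding mmul_def using False by simp
qed

lemma binom_nz:
  assumes "length u \<ge> 2"
  shows "(binom u [x] v :: 'k::field) \<noteq> 0 \<longleftrightarrow> v = u \<or> v = [x]"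
proof -
  have "u \<noteq> [x]" using assms by auto
  then show ?thesis unfolding binom_def by auto
qed

lemma lw_binom:
  assumes "length u \<ge> 2"
  shows "lw (binom u [x] :: nat list \<Rightarrow> 'k::field) = u"
  unfolding lw_def
proof (rule the_equality)
  show "(binom u [x] u :: 'k) \<noteq> 0 \<and> (\<forall>v. (binom u [x] v :: 'k) \<noteq> 0 \<longrightarrow> v = u \<or> deglex_less v u)"
    using binom_nz[OF assms, where 'k = 'k] assms by (auto intro: deglex_shorter)
next
  fix w assume w: "(binom u [x] w :: 'k) \<noteq> 0 \<and> (\<forall>v. (binom u [x] v :: 'k) \<noteq> 0 \<longrightarrow> v = w \<or> deglex_less v w)"
  then have "w = u \<or> w = [x]" using binom_nz[OF assms, where 'k = 'k] by blast
  moreover have "u = w \<or> deglex_less u w" using w binom_nz[OF assms, where 'k = 'k] by blast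
  ultimately show "w = u" using assms deglex_len by fastforce
qed

lemma sum_ind:
  assumes "finite V" "z \<in> V"
  shows "(\<Sum>v\<in>V. g v * (if v = z then 1 else 0)) = (g z :: 'k::field)"
proof -
  have "(\<Sum>v\<in>V. g v * (if v = z then 1 else 0)) = (\<Sum>v\<in>V. if v = z then g v else 0)"
    by (rule sum.cong) auto
  also have "\<dots> = g z" using assms by simp
  finally show ?thesis .
qed

lemma gs_ov:
  assumes GS: "GS_basis A {binom u [x] :: nat list \<Rightarrow> 'k::field}"
    and k2: "length u \<ge> 2" and uA: "u \<in> lists A"
    and eq: "u @ q = p @ u" and p0: "0 < length p" and pl: "length p < length u"
  shows "(x # q, p @ [x]) \<in> (E u x (u @ q))\<^sup>*"
proof (cases "x # q = p @ [x]")
  case True then show ?thesis by simp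
next
  case neq: False
  define f where "f = (binom u [x] :: nat list \<Rightarrow> 'k)"
  have lwf: "lw f = u" unfolding f_def by (rule lw_binom[OF k2])
  have lq: "length q = length p" using arg_cong[OF eq, of length] by simp
  have pA: "p \<in> lists A"
  proof -
    have "p = take (length p) (p @ u)" by simp
    also have "\<dots> = take (length p) u" using eq[symmetric] pl by simp
    finally show ?thesis using uA set_take_subset[of "length p" u] by (metis in_listsI in_lists_conv_set subsetD)
  qed
  have qA: "q \<in> lists A"
  proof -
    have "q = drop (length u) (u @ q)" by simp
    also have "\<dots> = drop (length u) (p @ u)" using eq by simp
    also have "\<dots> = drop (length u - length p) u" using pl by simp
    finally show ?thesis using uA set_drop_subset[of "length u - length p" u] by (metis in_listsI in_lists_conv_set subsetD)
  qed
  let ?w = "u @ q"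
  have g1: "\<forall>a b w. a \<in> lists A \<longrightarrow> b \<in> lists A \<longrightarrow> w = lw f @ b \<longrightarrow> w = a @ lw f \<longrightarrow>
      length (lw f) + length (lw f) > length w \<longrightarrow> trivial_mod A {f} w (\<lambda>v. mmul [] f b v - mmul a f [] v)"
    using GS[folded f_def] unfolding GS_basis_def by blast
  have "trivial_mod A {f} ?w (\<lambda>v. mmul [] f q v - mmul p f [] v)"
    using g1[unfolded lwf, rule_format, of p q ?w] pA qA eq lq pl by simp
  then obtain T c where T: "finite T"
    "\<forall>(a, s, b) \<in> T. a \<in> lists A \<and> b \<in> lists A \<and> s \<in> {f} \<and> deglex_less (a @ lw s @ b) ?w"
    and h: "(\<lambda>v. mmul [] f q v - mmul p f [] v) = (\<lambda>v. \<Sum>t\<in>T. c t * (case t of (a, s, b) \<Rightarrow> mmul a s b v))"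
    unfolding trivial_mod_def by blast
  define C where "C = {v. (x # q, v) \<in> (E u x ?w)\<^sup>*}"
  define \<chi> where "\<chi> v = (if v \<in> C then 1 else (0::'k))" for v
  define mm where "mm t v = (case t of (a, s, b) \<Rightarrow> mmul a (s :: nat list \<Rightarrow> 'k) b v)" for t v
  define V where "V = {p @ [x], x # q} \<union> (\<lambda>(a, s, b). a @ u @ b) ` T \<union> (\<lambda>(a, s, b). a @ [x] @ b) ` T"
  have finV: "finite V" unfolding V_def using T(1) by simp
  have Tf: "t \<in> T \<Longrightarrow> \<exists>a b. t = (a, f, b) \<and> deglex_less (a @ u @ b) ?w" for t
    using T(2) lwf by fastforce
  have K1: "\<chi> (a @ u @ b) = \<chi> (a @ [x] @ b)" if "(a, f, b) \<in> T" for a b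
  proof -
    have l: "deglex_less (a @ u @ b) ?w" using Tf[OF that] by auto
    have l2: "deglex_less (a @ [x] @ b) ?w"
      using deglex_len[OF l] k2 by (auto intro!: deglex_shorter)
    have st: "(a @ u @ b, a @ [x] @ b) \<in> S1 u x" unfolding S1_iff by blast
    have e: "(a @ u @ b, a @ [x] @ b) \<in> E u x ?w" using st l l2 unfolding E_def by blast
    have "a @ u @ b \<in> C \<longleftrightarrow> a @ [x] @ b \<in> C"
    proof
      assume "a @ u @ b \<in> C"
      then have "(x # q, a @ u @ b) \<in> (E u x ?w)\<^sup>*" unfolding C_def by simp
      then have "(x # q, a @ [x] @ b) \<in> (E u x ?w)\<^sup>*" by (rule rtrancl_into_rtrancl[OF _ e])
      then show "a @ [x] @ b \<in> C" unfolding C_def by simp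
    next
      assume "a @ [x] @ b \<in> C"
      then have "(x # q, a @ [x] @ b) \<in> (E u x ?w)\<^sup>*" unfolding C_def by simp
      then have "(x # q, a @ u @ b) \<in> (E u x ?w)\<^sup>*" by (rule rtrancl_into_rtrancl[OF _ E_sym[OF e]])
      then show "a @ u @ b \<in> C" unfolding C_def by simp
    qed
    then show ?thesis unfolding \<chi>_def by simp
  qed
  have hv: "mmul [] f q v - mmul p f [] v = (if v = p @ [x] then 1 else 0) - (if v = x # q then 1 else 0)" for v
    unfolding f_def mmul_binom using eq by simp
  have sum1: "(\<Sum>v\<in>V. \<chi> v * (mmul [] f q v - mmul p f [] v)) = \<chi> (p @ [x]) - \<chi> (x # q)"
  proof -
    have "(\<Sum>v\<in>V. \<chi> v * (mmul [] f q v - mmul p f [] v)) =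
          (\<Sum>v\<in>V. \<chi> v * (if v = p @ [x] then 1 else 0)) - (\<Sum>v\<in>V. \<chi> v * (if v = x # q then 1 else 0))"
      unfolding hv by (simp add: right_diff_distrib sum_subtractf)
    also have "\<dots> = \<chi> (p @ [x]) - \<chi> (x # q)"
      using sum_ind[OF finV, of "p @ [x]" \<chi>] sum_ind[OF finV, of "x # q" \<chi>] unfolding V_def by simp
    finally show ?thesis .
  qed
  have inner: "(\<Sum>v\<in>V. \<chi> v * mm t v) = 0" if t: "t \<in> T" for t
  proof -
    obtain a b where ab: "t = (a, f, b)" using Tf[OF t] by blast
    have inV: "a @ u @ b \<in> V" "a @ [x] @ b \<in> V" unfolding V_def using t ab by force+
    have "(\<Sum>v\<in>V. \<chi> v * mm t v) =
          (\<Sum>v\<in>V. \<chi> v * (if v = a @ u @ b then 1 else 0)) - (\<Sum>v\<in>V. \<chi> v * (if v = a @ [x] @ b then 1 else 0))"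
      unfolding mm_def ab f_def by (simp add: mmul_binom right_diff_distrib sum_subtractf)
    also have "\<dots> = \<chi> (a @ u @ b) - \<chi> (a @ [x] @ b)"
      using sum_ind[OF finV inV(1), of \<chi>] sum_ind[OF finV inV(2), of \<chi>] by simp
    also have "\<dots> = 0" using K1 t ab by simp
    finally show ?thesis .
  qed
  have sum2: "(\<Sum>v\<in>V. \<chi> v * (mmul [] f q v - mmul p f [] v)) = 0"
  proof -
    have "(\<Sum>v\<in>V. \<chi> v * (mmul [] f q v - mmul p f [] v)) = (\<Sum>v\<in>V. \<chi> v * (\<Sum>t\<in>T. c t * mm t v))"
      using fun_cong[OF h] unfolding mm_def by simp
    also have "\<dots> = (\<Sum>v\<in>V. \<Sum>t\<in>T. c t * (\<chi> v * mm t v))"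
      by (simp add: sum_distrib_left mult.left_commute)
    also have "\<dots> = (\<Sum>t\<in>T. \<Sum>v\<in>V. c t * (\<chi> v * mm t v))" by (rule sum.swap)
    also have "\<dots> = (\<Sum>t\<in>T. c t * (\<Sum>v\<in>V. \<chi> v * mm t v))" by (simp add: sum_distrib_left)
    also have "\<dots> = 0" using inner by simp
    finally show ?thesis .
  qed
  have "\<chi> (x # q) = 1" unfolding \<chi>_def C_def by simp
  then have "\<chi> (p @ [x]) = 1" using sum1 sum2 by simp
  then have "p @ [x] \<in> C" unfolding \<chi>_def by (metis zero_neq_one)
  then show ?thesis unfolding C_def by simp
qed


definition Pw :: "nat list \<Rightarrow> nat list \<Rightarrow> bool" where
  "Pw u w \<longleftrightarrow> w \<noteq> [] \<and> length w mod (length u - 1) = 0 \<and>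
     (\<forall>i<length w. w ! i = butlast u ! (i mod (length u - 1)))"

context
  fixes u :: "nat list" and x :: nat
  assumes k2: "length u \<ge> 2"
begin

lemma u_split: "u = butlast u @ [last u]"
  using k2 by (metis append_butlast_last_id list.size(3) not_numeral_le_zero)

lemma lbut: "length (butlast u) = length u - 1" by simp

lemma K_pos: "length u - 1 > 0" using k2 by simp

lemma Pw_base: "Pw u (butlast u)"
proof -
  have ne: "butlast u \<noteq> []" using K_pos lbut by (metis length_greater_0_conv)
  then show ?thesis unfolding Pw_def by (simp add: lbut)
qed

lemma Pw_cons:
  assumes "Pw u w" shows "Pw u (butlast u @ w)"
proof -
  let ?K = "length u - 1"
  have w: "w \<noteq> []" "length w mod ?K = 0" "\<forall>i<length w. w ! i = butlast u ! (i mod ?K)"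
    using assms unfolding Pw_def by auto
  have "length (butlast u @ w) mod ?K = 0" using w(2) by (simp add: lbut)
  moreover have "(butlast u @ w) ! i = butlast u ! (i mod ?K)" if "i < length (butlast u @ w)" for i
  proof (cases "i < ?K")
    case True then show ?thesis by (simp add: nth_append lbut)
  next
    case False
    then have "i - ?K < length w" using that by (simp add: lbut)
    then have "w ! (i - ?K) = butlast u ! ((i - ?K) mod ?K)" using w(3) by simp
    moreover have "(i - ?K) mod ?K = i mod ?K" using False le_mod_geq[of ?K i] by simp
    ultimately show ?thesis using False by (simp add: nth_append lbut)
  qed
  ultimately show ?thesis unfolding Pw_def using w(1) by simp
qed

lemma Pw_dec:
  assumes "Pw u w"
  shows "w = butlast u \<or> (\<exists>w2. w = butlast u @ w2 \<and> Pw u w2 \<and> length w > length u - 1)"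
proof -
  let ?K = "length u - 1"
  have w: "w \<noteq> []" "length w mod ?K = 0" "\<forall>i<length w. w ! i = butlast u ! (i mod ?K)"
    using assms unfolding Pw_def by auto
  have geK: "length w \<ge> ?K"
  proof (rule ccontr)
    assume "\<not> ?K \<le> length w"
    then have "length w mod ?K = length w" by simp
    then show False using w(1,2) by simp
  qed
  have tk: "take ?K w = butlast u"
  proof (rule nth_equalityI)
    show "length (take ?K w) = length (butlast u)" using geK by (simp add: lbut)
    fix i assume "i < length (take ?K w)"
    then have "i < ?K" "i < length w" by auto
    then show "take ?K w ! i = butlast u ! i" using w(3) by simp
  qed
  show ?thesis
  proof (cases "length w = ?K")
    case True then show ?thesis using tk by simp
  next
    case False
    then have gt: "length w > ?K" using geK by simp
    let ?w2 = "drop ?K w"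
    have dec: "w = butlast u @ ?w2" using tk by (metis append_take_drop_id)
    have "Pw u ?w2" unfolding Pw_def
    proof (intro conjI allI impI)
      show "?w2 \<noteq> []" using gt by simp
      show "length ?w2 mod ?K = 0" using w(2) gt le_mod_geq[of ?K "length w"] by simp
      fix i assume "i < length ?w2"
      then have "i + ?K < length w" by simp
      then have "w ! (i + ?K) = butlast u ! ((i + ?K) mod ?K)" using w(3) by simp
      moreover have "?w2 ! i = w ! (?K + i)" by (rule nth_drop) (use gt in simp)
      ultimately show "?w2 ! i = butlast u ! (i mod ?K)" by (simp add: add.commute)
    qed
    then show ?thesis using dec gt by blast
  qed
qed

lemma irr_prefix: "irr u (a @ b) \<Longrightarrow> irr u a"
  unfolding irr_def by (metis append.assoc)

lemma snoc_occ:
  assumes "irr u y" "y @ [c] = P @ u @ Q"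
  shows "Q = []"
proof (rule ccontr)
  assume "Q \<noteq> []"
  then obtain Q' d where "Q = Q' @ [d]" by (metis rev_exhaust)
  then have "y @ [c] = (P @ u @ Q') @ [d]" using assms(2) by simp
  then have "y = P @ u @ Q'" by (simp only: append1_eq_conv)
  then show False using assms(1) unfolding irr_def by blast
qed

lemma red_to:
  assumes "Pw u w" "length w > length u - 1 \<longrightarrow> x = last u"
  shows "(d @ w @ [last u], d @ [x]) \<in> (S1 u x)\<^sup>*"
  using assms
proof (induction w arbitrary: d rule: measure_induct_rule[where f = length])
  case (less w)
  have base: "(d' @ butlast u @ [last u], d' @ [x]) \<in> S1 u x" for d'
    unfolding S1_iff using u_split
    by (metis append.assoc append.right_neutral)
  from Pw_dec[OF less.prems(1)] show ?case
  proof
    assume "w = butlast u" then show ?thesis using base[of d] by (simp add: r_into_rtrancl)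
  next
    assume "\<exists>w2. w = butlast u @ w2 \<and> Pw u w2 \<and> length w > length u - 1"
    then obtain w2 where w2: "w = butlast u @ w2" "Pw u w2" "length w > length u - 1" by blast
    then have xl: "x = last u" using less.prems(2) by simp
    have "length w2 < length w" using w2(1) K_pos by (simp add: lbut)
    then have "((d @ butlast u) @ w2 @ [last u], (d @ butlast u) @ [x]) \<in> (S1 u x)\<^sup>*"
      using less.IH w2(2) xl by blast
    moreover have "((d @ butlast u) @ [x], d @ [x]) \<in> S1 u x" using base[of d] xl by simp
    ultimately show ?thesis using w2(1) by (simp add: rtrancl_into_rtrancl)
  qed
qed

lemma red_inv:
  assumes irr: "irr u \<alpha>" and r: "(\<alpha> @ [i], z) \<in> (S1 u x)\<^sup>*"
  shows "z = \<alpha> @ [i] \<or> (\<exists>d w. \<alpha> = d @ w \<and> Pw u w \<and> z = d @ [x] \<and> i = last u \<and>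
            (length w > length u - 1 \<longrightarrow> x = last u))"
  using r
proof (induction rule: rtrancl_induct)
  case base then show ?case by simp
next
  case (step y z)
  obtain P Q where PQ: "y = P @ u @ Q" "z = P @ [x] @ Q" using step(2) S1_iff by blast
  from step(3) show ?case
  proof
    assume y: "y = \<alpha> @ [i]"
    have "Q = []" using snoc_occ[OF irr] PQ(1) y by simp
    then have "\<alpha> @ [i] = (P @ butlast u) @ [last u]" using PQ(1) y u_split by (metis append.assoc append.right_neutral)
    then have "\<alpha> = P @ butlast u \<and> i = last u" by (simp only: append1_eq_conv)
    then show ?thesis using PQ(2) \<open>Q = []\<close> Pw_base by (auto simp: lbut)
  next
    assume "\<exists>d w. \<alpha> = d @ w \<and> Pw u w \<and> y = d @ [x] \<and> i = last u \<and> (length w > length u - 1 \<longrightarrow> x = last u)"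
    then obtain d w where dw: "\<alpha> = d @ w" "Pw u w" "y = d @ [x]" "i = last u" by blast
    have irrd: "irr u d" using irr dw(1) irr_prefix by blast
    have "Q = []" using snoc_occ[OF irrd] PQ(1) dw(3) by simp
    then have "d @ [x] = (P @ butlast u) @ [last u]" using PQ(1) dw(3) u_split by (metis append.assoc append.right_neutral)
    then have dd: "d = P @ butlast u \<and> x = last u" by (simp only: append1_eq_conv)
    have "\<alpha> = P @ (butlast u @ w)" using dw(1) dd by simp
    moreover have "Pw u (butlast u @ w)" by (rule Pw_cons[OF dw(2)])
    moreover have "z = P @ [x]" using PQ(2) \<open>Q = []\<close> by simp
    ultimately show ?thesis using dw(4) dd by blast
  qed
qed

end


definition ol :: "'c option \<Rightarrow> 'c list" where
  "ol a = (case a of None \<Rightarrow> [] | Some c \<Rightarrow> [c])"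

definition trk1 :: "('c option \<times> 'c option) list \<Rightarrow> 'c list" where
  "trk1 p = concat (map (\<lambda>ab. ol (fst ab)) p)"

definition trk2 :: "('c option \<times> 'c option) list \<Rightarrow> 'c list" where
  "trk2 p = concat (map (\<lambda>ab. ol (snd ab)) p)"

definition diag :: "'c list \<Rightarrow> ('c option \<times> 'c option) list" where
  "diag d = map (\<lambda>c. (Some c, Some c)) d"

lemma trk1_app[simp]: "trk1 (p @ q) = trk1 p @ trk1 q" unfolding trk1_def by simp
lemma trk2_app[simp]: "trk2 (p @ q) = trk2 p @ trk2 q" unfolding trk2_def by simp
lemma trk1_Nil[simp]: "trk1 [] = []" unfolding trk1_def by simp
lemma trk2_Nil[simp]: "trk2 [] = []" unfolding trk2_def by simp
lemma trk1_Cons[simp]: "trk1 (ab # p) = ol (fst ab) @ trk1 p" unfolding trk1_def by simp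
lemma trk2_Cons[simp]: "trk2 (ab # p) = ol (snd ab) @ trk2 p" unfolding trk2_def by simp
lemma ol_simps[simp]: "ol None = []" "ol (Some c) = [c]" unfolding ol_def by simp_all

lemma pad_Cons[simp]: "pad (a # \<alpha>) (b # \<beta>) = (Some a, Some b) # pad \<alpha> \<beta>"
  unfolding pad_def by simp

lemma pad_Nil1[simp]: "pad [] \<beta> = map (\<lambda>b. (None, Some b)) \<beta>"
  unfolding pad_def by (induction \<beta>) auto

lemma pad_Nil2[simp]: "pad \<alpha> [] = map (\<lambda>a. (Some a, None)) \<alpha>"
  unfolding pad_def by (induction \<alpha>) auto

lemma trk1_map1[simp]: "trk1 (map (\<lambda>a. (Some a, None)) \<alpha>) = \<alpha>" by (induction \<alpha>) simp_all
lemma trk1_map2[simp]: "trk1 (map (\<lambda>b. (None, Some b)) \<beta>) = []" by (induction \<beta>) simp_all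
lemma trk2_map1[simp]: "trk2 (map (\<lambda>a. (Some a, None)) \<alpha>) = []" by (induction \<alpha>) simp_all
lemma trk2_map2[simp]: "trk2 (map (\<lambda>b. (None, Some b)) \<beta>) = \<beta>" by (induction \<beta>) simp_all

lemma trk1_pad[simp]: "trk1 (pad \<alpha> \<beta>) = \<alpha>"
  by (induction \<alpha> \<beta> rule: list_induct2') simp_all

lemma trk2_pad[simp]: "trk2 (pad \<alpha> \<beta>) = \<beta>"
  by (induction \<alpha> \<beta> rule: list_induct2') simp_all

lemma len_pad: "length (pad \<alpha> \<beta>) = max (length \<alpha>) (length \<beta>)"
  by (induction \<alpha> \<beta> rule: list_induct2') simp_all

lemma pad_lists:
  assumes "\<alpha> \<in> lists \<Sigma>" "\<beta> \<in> lists \<Sigma>"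
  shows "pad \<alpha> \<beta> \<in> lists (pad_alph \<Sigma>)"
  using assms
  by (induction \<alpha> \<beta> rule: list_induct2') (auto simp: pad_alph_def)

lemma diag_pad: "diag d = pad d d"
  unfolding diag_def by (induction d) simp_all

lemma pad_app: "pad (d @ \<alpha>) (d @ \<beta>) = diag d @ pad \<alpha> \<beta>"
  unfolding diag_def by (induction d) simp_all

lemma trk1_diag[simp]: "trk1 (diag d) = d" unfolding diag_def by (induction d) simp_all
lemma trk2_diag[simp]: "trk2 (diag d) = d" unfolding diag_def by (induction d) simp_all

lemma diag_lists:
  assumes "p \<in> lists ((\<lambda>c. (Some c, Some c)) ` \<Sigma>)"
  shows "p = diag (trk1 p) \<and> trk1 p \<in> lists \<Sigma>"
  using assms unfolding diag_def by (induction p) auto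

lemma diag_in: "d \<in> lists \<Sigma> \<Longrightarrow> diag d \<in> lists ((\<lambda>c. (Some c, Some c)) ` \<Sigma>)"
  unfolding diag_def by (induction d) auto

lemma pad_single_nth:
  assumes "w \<noteq> []" "i < length w"
  shows "pad w [x] ! i = (Some (w ! i), if i = 0 then Some x else None)"
proof -
  obtain c w' where w: "w = c # w'" using assms(1) by (cases w) auto
  show ?thesis using assms(2) unfolding w by (cases i) auto
qed

lemma len_pad_single: "w \<noteq> [] \<Longrightarrow> length (pad w [x]) = length w"
  by (simp add: len_pad) (metis One_nat_def Suc_leI length_greater_0_conv max.absorb1)


definition lastn :: "nat \<Rightarrow> 'a list \<Rightarrow> 'a list" where
  "lastn j v = drop (length v - j) v"

definition Lw :: "nat \<Rightarrow> nat list \<Rightarrow> nat list set" where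
  "Lw n u = {\<alpha> \<in> lists {0..<n}. \<alpha> \<noteq> [] \<and> irr u \<alpha>}"

lemma lastn_snoc:
  assumes "K > 0"
  shows "lastn K (v @ [c]) = lastn K (lastn K v @ [c])"
  using assms unfolding lastn_def by (cases "K \<le> length v") (simp_all add: drop_append Suc_diff_le)

lemma lastn_len: "length (lastn K v) \<le> K" unfolding lastn_def by simp

lemma lastn_app: "lastn (length b) (a @ b) = b" unfolding lastn_def by simp

lemma lastn_split: "v = take (length v - K) v @ lastn K v" unfolding lastn_def by simp

context
  fixes u :: "nat list" and x :: nat
  assumes k2: "length u \<ge> 2"
begin

lemma suffix_iff: "(\<exists>P. \<alpha> @ [c] = P @ u) \<longleftrightarrow> lastn (length u - 1) \<alpha> @ [c] = u"
proof
  assume "\<exists>P. \<alpha> @ [c] = P @ u"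
  then obtain P where "\<alpha> @ [c] = (P @ butlast u) @ [last u]" using u_split[OF k2] by (metis append.assoc)
  then have "\<alpha> = P @ butlast u \<and> c = last u" by (simp only: append1_eq_conv)
  then show "lastn (length u - 1) \<alpha> @ [c] = u"
  proof -
    assume a: "\<alpha> = P @ butlast u \<and> c = last u"
    have "lastn (length u - 1) (P @ butlast u) = butlast u"
      using lastn_app[where a = P and b = "butlast u"] by simp
    then show ?thesis using a u_split[OF k2] by simp
  qed
next
  assume h: "lastn (length u - 1) \<alpha> @ [c] = u"
  then have "lastn (length u - 1) \<alpha> @ [c] = butlast u @ [last u]" using u_split[OF k2] by simp
  then have "lastn (length u - 1) \<alpha> = butlast u \<and> c = last u" by (simp only: append1_eq_conv)
  then have "\<alpha> @ [c] = take (length \<alpha> - (length u - 1)) \<alpha> @ u"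
    using lastn_split[of \<alpha> "length u - 1"] u_split[OF k2] by (metis append.assoc)
  then show "\<exists>P. \<alpha> @ [c] = P @ u" by blast
qed

lemma irr_snoc: "irr u (\<alpha> @ [c]) \<longleftrightarrow> irr u \<alpha> \<and> lastn (length u - 1) \<alpha> @ [c] \<noteq> u"
proof
  assume h: "irr u (\<alpha> @ [c])"
  have "irr u \<alpha>" using irr_prefix[OF k2 h] .
  moreover have "\<not> (\<exists>P. \<alpha> @ [c] = P @ u)" using h unfolding irr_def by (metis append.right_neutral)
  ultimately show "irr u \<alpha> \<and> lastn (length u - 1) \<alpha> @ [c] \<noteq> u" using suffix_iff by blast
next
  assume h: "irr u \<alpha> \<and> lastn (length u - 1) \<alpha> @ [c] \<noteq> u"
  show "irr u (\<alpha> @ [c])" unfolding irr_def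
  proof (intro allI notI)
    fix P Q assume e: "\<alpha> @ [c] = P @ u @ Q"
    then have "Q = []" using snoc_occ[OF k2] h by blast
    then have "\<exists>P. \<alpha> @ [c] = P @ u" using e by auto
    then show False using h suffix_iff by blast
  qed
qed

lemma regular_L:
  assumes "set u \<subseteq> \<Sigma>" "finite \<Sigma>"
  shows "regular \<Sigma> {\<alpha> \<in> lists \<Sigma>. \<alpha> \<noteq> [] \<and> irr u \<alpha>}"
proof (rule regular_st[where st = "\<lambda>\<alpha>. (\<alpha> = [], irr u \<alpha>, lastn (length u - 1) \<alpha>)"
      and \<delta> = "\<lambda>(e, r, s) c. (False, r \<and> s @ [c] \<noteq> u, lastn (length u - 1) (s @ [c]))"
      and P = "\<lambda>(e, r, s). \<not> e \<and> r"])
  have "(\<lambda>\<alpha>. (\<alpha> = [], irr u \<alpha>, lastn (length u - 1) \<alpha>)) ` lists \<Sigma> \<subseteq>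
        UNIV \<times> UNIV \<times> {s. set s \<subseteq> \<Sigma> \<and> length s \<le> length u - 1}"
    using lastn_len by (fastforce simp: lastn_def dest: in_set_dropD)
  moreover have "finite (UNIV \<times> UNIV \<times> {s. set s \<subseteq> \<Sigma> \<and> length s \<le> length u - 1} :: (bool \<times> bool \<times> nat list) set)"
    using finite_lists_length_le[OF assms(2)] by simp
  ultimately show "finite ((\<lambda>\<alpha>. (\<alpha> = [], irr u \<alpha>, lastn (length u - 1) \<alpha>)) ` lists \<Sigma>)"
    by (rule finite_subset)
next
  fix w c
  have "length u - 1 > 0" using k2 by simp
  then show "(w @ [c] = [], irr u (w @ [c]), lastn (length u - 1) (w @ [c])) =
    (\<lambda>(e, r, s) c. (False, r \<and> s @ [c] \<noteq> u, lastn (length u - 1) (s @ [c]))) (w = [], irr u w, lastn (length u - 1) w) c"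
    using irr_snoc lastn_snoc[OF \<open>length u - 1 > 0\<close>, of w c] by simp
qed auto

end


definition TP :: "nat list \<Rightarrow> nat \<Rightarrow> (nat option \<times> nat option) list set" where
  "TP u x = {pad w [x] | w. Pw u w \<and> (length w > length u - 1 \<longrightarrow> x = last u)}"

definition FF :: "nat list \<Rightarrow> nat \<Rightarrow> nat \<Rightarrow> nat option \<times> nat option" where
  "FF u x i = (Some (butlast u ! (i mod (length u - 1))), if i = 0 then Some x else None)"

lemma all_snoc: "(\<forall>i<length (p @ [c]). (p @ [c]) ! i = f i) \<longleftrightarrow> (\<forall>i<length p. p ! i = f i) \<and> c = f (length p)"
proof
  assume h: "\<forall>i<length (p @ [c]). (p @ [c]) ! i = f i"
  have "\<forall>i<length p. p ! i = f i"
  proof (intro allI impI)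
    fix i assume "i < length p"
    then show "p ! i = f i" using h[rule_format, of i] by (simp add: nth_append)
  qed
  moreover have "c = f (length p)" using h[rule_format, of "length p"] by simp
  ultimately show "(\<forall>i<length p. p ! i = f i) \<and> c = f (length p)" by blast
next
  assume h: "(\<forall>i<length p. p ! i = f i) \<and> c = f (length p)"
  show "\<forall>i<length (p @ [c]). (p @ [c]) ! i = f i"
  proof (intro allI impI)
    fix i assume "i < length (p @ [c])"
    then have "i < length p \<or> i = length p" by auto
    then show "(p @ [c]) ! i = f i" using h by (auto simp: nth_append)
  qed
qed

context
  fixes u :: "nat list" and x :: nat
  assumes k2: "length u \<ge> 2"
begin

lemma Pw_set: "Pw u w \<Longrightarrow> set w \<subseteq> set u"
proof
  fix a assume P: "Pw u w" and a: "a \<in> set w"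
  then obtain i where i: "i < length w" "a = w ! i" by (metis in_set_conv_nth)
  have K: "length u - 1 > 0" using k2 by simp
  then have "i mod (length u - 1) < length (butlast u)" by simp
  then have "butlast u ! (i mod (length u - 1)) \<in> set (butlast u)" by (rule nth_mem)
  moreover have "a = butlast u ! (i mod (length u - 1))" using P i unfolding Pw_def by simp
  ultimately show "a \<in> set u" by (meson in_set_butlastD)
qed

lemma TP_char:
  "p \<in> TP u x \<longleftrightarrow> p \<noteq> [] \<and> length p mod (length u - 1) = 0 \<and> (length p > length u - 1 \<longrightarrow> x = last u)
      \<and> (\<forall>i<length p. p ! i = FF u x i)"
proof
  assume "p \<in> TP u x"
  then obtain w where w: "p = pad w [x]" "Pw u w" "length w > length u - 1 \<longrightarrow> x = last u"
    unfolding TP_def by blast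
  have ne: "w \<noteq> []" using w(2) unfolding Pw_def by simp
  have len: "length p = length w" using w(1) len_pad_single[OF ne] by simp
  have "\<forall>i<length p. p ! i = FF u x i"
    using w(1,2) len pad_single_nth[OF ne] unfolding Pw_def FF_def by simp
  then show "p \<noteq> [] \<and> length p mod (length u - 1) = 0 \<and> (length p > length u - 1 \<longrightarrow> x = last u)
      \<and> (\<forall>i<length p. p ! i = FF u x i)" using len ne w(2,3) unfolding Pw_def
    by (metis length_0_conv)
next
  assume h: "p \<noteq> [] \<and> length p mod (length u - 1) = 0 \<and> (length p > length u - 1 \<longrightarrow> x = last u)
      \<and> (\<forall>i<length p. p ! i = FF u x i)"
  define w where "w = map (\<lambda>ab. the (fst ab)) p"
  have ne: "w \<noteq> []" using h unfolding w_def by simp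
  have wi: "w ! i = butlast u ! (i mod (length u - 1))" if "i < length w" for i
    using that h unfolding w_def FF_def by simp
  have Pw: "Pw u w" unfolding Pw_def using ne wi h unfolding w_def by simp
  have "p = pad w [x]"
  proof (rule nth_equalityI)
    show "length p = length (pad w [x])" using len_pad_single[OF ne] unfolding w_def by simp
    fix i assume "i < length p"
    then show "p ! i = pad w [x] ! i"
      using h pad_single_nth[OF ne, of i x] wi[of i] unfolding FF_def by (simp add: w_def)
  qed
  then show "p \<in> TP u x" unfolding TP_def using Pw h unfolding w_def by auto
qed

lemma regular_TP:
  assumes "set u \<subseteq> \<Sigma>" "x \<in> \<Sigma>"
  shows "regular (pad_alph \<Sigma>) (TP u x)"
proof (rule regular_st[where st = "\<lambda>p. ((\<forall>i<length p. p ! i = FF u x i), length p mod (length u - 1), min (length p) (length u))"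
      and \<delta> = "\<lambda>(ok, m, l) c. (ok \<and> c = (Some (butlast u ! m), if l = 0 then Some x else None),
                 Suc m mod (length u - 1), min (Suc l) (length u))"
      and P = "\<lambda>(ok, m, l). ok \<and> l \<noteq> 0 \<and> m = 0 \<and> (l > length u - 1 \<longrightarrow> x = last u)"])
  let ?K = "length u - 1"
  have K: "?K > 0" using k2 by simp
  show "finite ((\<lambda>p. ((\<forall>i<length p. p ! i = FF u x i), length p mod ?K, min (length p) (length u))) ` lists (pad_alph \<Sigma>))"
  proof (rule finite_subset[of _ "UNIV \<times> {..<?K} \<times> {..length u}"])
    show "(\<lambda>p. ((\<forall>i<length p. p ! i = FF u x i), length p mod ?K, min (length p) (length u))) ` lists (pad_alph \<Sigma>)
        \<subseteq> UNIV \<times> {..<?K} \<times> {..length u}" using K by auto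
  qed simp
next
  fix w :: "(nat option \<times> nat option) list" and c
  let ?K = "length u - 1"
  have K: "?K > 0" using k2 by simp
  have F: "FF u x (length w) = (Some (butlast u ! (length w mod ?K)), if min (length w) (length u) = 0 then Some x else None)"
    unfolding FF_def using k2 by auto
  show "((\<forall>i<length (w @ [c]). (w @ [c]) ! i = FF u x i), length (w @ [c]) mod ?K, min (length (w @ [c])) (length u)) =
    (\<lambda>(ok, m, l) c. (ok \<and> c = (Some (butlast u ! m), if l = 0 then Some x else None), Suc m mod ?K, min (Suc l) (length u)))
      ((\<forall>i<length w. w ! i = FF u x i), length w mod ?K, min (length w) (length u)) c"
    using all_snoc[of w c "FF u x"] F by (simp add: mod_Suc_eq)
next
  fix p assume p: "p \<in> lists (pad_alph \<Sigma>)"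
  have "(min (length p) (length u) > length u - 1) = (length p > length u - 1)" using k2 by auto
  moreover have "(min (length p) (length u) \<noteq> 0) = (p \<noteq> [])" using k2 by auto
  ultimately show "(p \<in> TP u x) = (case ((\<forall>i<length p. p ! i = FF u x i), length p mod (length u - 1), min (length p) (length u)) of
         (ok, m, l) \<Rightarrow> ok \<and> l \<noteq> 0 \<and> m = 0 \<and> (l > length u - 1 \<longrightarrow> x = last u))"
    unfolding TP_char by auto
next
  show "TP u x \<subseteq> lists (pad_alph \<Sigma>)"
  proof
    fix p assume "p \<in> TP u x"
    then obtain w where w: "p = pad w [x]" "Pw u w" unfolding TP_def by blast
    have wl: "w \<in> lists \<Sigma>" using Pw_set[OF w(2)] assms(1) by auto
    have xl: "[x] \<in> lists \<Sigma>" using assms(2) by simp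
    have "pad w [x] \<in> lists (pad_alph \<Sigma>)" by (rule pad_lists[OF wl xl])
    then show "p \<in> lists (pad_alph \<Sigma>)" using w(1) by simp
  qed
qed

end


lemma concat_single[simp]: "concat (map (\<lambda>i. [i]) \<alpha>) = \<alpha>" by (induction \<alpha>) simp_all

lemma eqS_iff: "eqS R (\<lambda>i. [i]) \<alpha> \<beta> \<longleftrightarrow> \<alpha> \<noteq> [] \<and> \<beta> \<noteq> [] \<and> (\<alpha>, \<beta>) \<in> cong_gen R"
  unfolding eqS_def by simp

lemma rt_cong: "(a, b) \<in> (S1 u x)\<^sup>* \<Longrightarrow> (a, b) \<in> cong_gen {(u, [x])}"
  unfolding cong_gen_def S1_def by (rule rtrancl_mono[THEN subsetD, rotated]) auto

lemma cong_refl: "(a, a) \<in> cong_gen R" unfolding cong_gen_def by simp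

lemma cong_sym: "(a, b) \<in> cong_gen R \<Longrightarrow> (b, a) \<in> cong_gen R"
  unfolding cong_gen_def
proof (induction rule: rtrancl_induct)
  case base then show ?case by simp
next
  case (step y z)
  then have "(z, y) \<in> rstep R \<union> (rstep R)\<inverse>" by auto
  then show ?case using step(3) by (rule converse_rtrancl_into_rtrancl)
qed

lemma S1_lists:
  assumes r: "(a, b) \<in> (S1 u x)\<^sup>*" and a: "a \<in> lists \<Sigma>" and xs: "x \<in> \<Sigma>"
  shows "b \<in> lists \<Sigma>"
  using r
proof (induction rule: rtrancl_induct)
  case base show ?case by (rule a)
next
  case (step y z)
  then obtain P Q where PQ: "y = P @ u @ Q" "z = P @ [x] @ Q" using S1_iff by blast
  have "P \<in> lists \<Sigma>" "Q \<in> lists \<Sigma>" using step(3) PQ(1) by simp_all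
  then show ?case using PQ(2) xs by simp
qed

lemma S1_ne:
  assumes r: "(a, b) \<in> (S1 u x)\<^sup>*" and a: "a \<noteq> []"
  shows "b \<noteq> []"
  using r
proof (induction rule: rtrancl_induct)
  case base show ?case by (rule a)
next
  case (step y z)
  then obtain P Q where "z = P @ [x] @ Q" using S1_iff by blast
  then show ?case by simp
qed

context
  fixes n :: nat and u :: "nat list" and x :: nat
  assumes k2: "length u \<ge> 2" and uA: "set u \<subseteq> {0..<n}" and xA: "x < n"
    and UN: "\<And>w. UNF u x w"
begin

lemma NFs_irr: "irr u v \<Longrightarrow> NFs u x v = {v}"
  using UN[of v] unfolding UNF_def NFs_def by blast

lemma cong_to_irr: "(a, b) \<in> cong_gen {(u, [x])} \<Longrightarrow> irr u b \<Longrightarrow> (a, b) \<in> (S1 u x)\<^sup>*"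
  using cong_NFs[OF k2 UN, of a b] NFs_irr[of b] unfolding NFs_def by blast

lemma cong_irr2: "(a, b) \<in> cong_gen {(u, [x])} \<Longrightarrow> irr u a \<Longrightarrow> irr u b \<Longrightarrow> a = b"
  using cong_NFs[OF k2 UN, of a b] NFs_irr[of a] NFs_irr[of b] by simp

lemma main_pa: "prefix_automatic {0..<n} {(u, [x])}"
proof -
  let ?\<Sigma> = "{0..<n}"
  let ?\<Sigma>p = "pad_alph ?\<Sigma>"
  let ?R = "{(u, [x])}"
  let ?g = "\<lambda>i::nat. [i]"
  define L where "L = Lw n u"
  define Dn where "Dn = (\<lambda>c. (Some c, Some c)) ` ?\<Sigma>"
  define TopL where "TopL = {p \<in> lists ?\<Sigma>p. trk1 p \<in> L}"
  define BotL where "BotL = {p \<in> lists ?\<Sigma>p. trk2 p \<in> L}"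
  have Lirr: "\<alpha> \<in> L \<longleftrightarrow> \<alpha> \<in> lists ?\<Sigma> \<and> \<alpha> \<noteq> [] \<and> irr u \<alpha>" for \<alpha> unfolding L_def Lw_def by simp
  have regL: "regular ?\<Sigma> L" unfolding L_def Lw_def using regular_L[OF k2 uA] by simp
  have DnS: "Dn \<subseteq> ?\<Sigma>p" unfolding Dn_def pad_alph_def by auto
  have hS: "\<forall>c\<in>?\<Sigma>p. ol (fst c) \<in> lists ?\<Sigma>" "\<forall>c\<in>?\<Sigma>p. ol (snd c) \<in> lists ?\<Sigma>"
    unfolding pad_alph_def by auto
  have regTop: "regular ?\<Sigma>p TopL"
  proof -
    have "TopL = {p \<in> lists ?\<Sigma>p. concat (map (\<lambda>c. ol (fst c)) p) \<in> L}"
      unfolding TopL_def trk1_def by (rule refl)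
    then show ?thesis using regular_preimage[OF regL hS(1)] by (simp only:)
  qed
  have regBot: "regular ?\<Sigma>p BotL"
  proof -
    have "BotL = {p \<in> lists ?\<Sigma>p. concat (map (\<lambda>c. ol (snd c)) p) \<in> L}"
      unfolding BotL_def trk2_def by (rule refl)
    then show ?thesis using regular_preimage[OF regL hS(2)] by (simp only:)
  qed
  have padL: "pad \<alpha> \<beta> \<in> lists ?\<Sigma>p" if "\<alpha> \<in> L" "\<beta> \<in> L" for \<alpha> \<beta>
  proof -
    have "\<alpha> \<in> lists ?\<Sigma>" "\<beta> \<in> lists ?\<Sigma>" using that Lirr by auto
    then show ?thesis by (rule pad_lists)
  qed
  have eq0: "{pad \<alpha> \<beta> | \<alpha> \<beta>. \<alpha> \<in> L \<and> \<beta> \<in> L \<and> eqS ?R ?g (\<alpha> @ []) \<beta>} = lists Dn \<inter> TopL"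
  proof (intro set_eqI iffI)
    fix p assume "p \<in> {pad \<alpha> \<beta> | \<alpha> \<beta>. \<alpha> \<in> L \<and> \<beta> \<in> L \<and> eqS ?R ?g (\<alpha> @ []) \<beta>}"
    then obtain \<alpha> \<beta> where ab: "p = pad \<alpha> \<beta>" "\<alpha> \<in> L" "\<beta> \<in> L" "eqS ?R ?g \<alpha> \<beta>" by auto
    have "\<alpha> = \<beta>" using cong_irr2 ab eqS_iff Lirr by blast
    then have "p = diag \<alpha>" using ab(1) diag_pad by metis
    have aL: "\<alpha> \<in> lists ?\<Sigma>" using ab Lirr by simp
    have "p \<in> lists Dn" unfolding Dn_def using diag_in[OF aL] \<open>p = diag \<alpha>\<close> by simp
    moreover have "p \<in> TopL" unfolding TopL_def using padL[OF ab(2,3)] ab(1,2) by simp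
    ultimately show "p \<in> lists Dn \<inter> TopL" by blast
  next
    fix p assume p: "p \<in> lists Dn \<inter> TopL"
    then have d: "p = diag (trk1 p)" using diag_lists unfolding Dn_def by blast
    have tL: "trk1 p \<in> L" using p unfolding TopL_def by simp
    have e: "eqS ?R ?g (trk1 p @ []) (trk1 p)" using tL Lirr eqS_iff cong_refl by simp
    have pp: "p = pad (trk1 p) (trk1 p)" using d diag_pad[of "trk1 p"] by (rule trans)
    show "p \<in> {pad \<alpha> \<beta> | \<alpha> \<beta>. \<alpha> \<in> L \<and> \<beta> \<in> L \<and> eqS ?R ?g (\<alpha> @ []) \<beta>}"
      using pp tL e by blast
  qed
  have reg0: "regular ?\<Sigma>p (lists Dn \<inter> TopL)"
    by (rule regular_inter[OF regular_lists[OF DnS] regTop])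
  have regi: "regular ?\<Sigma>p {pad \<alpha> \<beta> | \<alpha> \<beta>. \<alpha> \<in> L \<and> \<beta> \<in> L \<and> eqS ?R ?g (\<alpha> @ [i]) \<beta>}"
    if i: "i < n" for i
  proof -
    define Acore where "Acore = {a @ b | a b. a \<in> lists Dn \<and> b \<in> {[(None, Some i)]}}"
    define Ccore where "Ccore = {a @ b | a b. a \<in> lists Dn \<and> b \<in> TP u x}"
    define Cset where "Cset = (if i = last u then Ccore else {})"
    have iS: "(None, Some i) \<in> ?\<Sigma>p" using i unfolding pad_alph_def by auto
    have regA: "regular ?\<Sigma>p Acore"
      unfolding Acore_def by (rule regular_concat[OF regular_lists[OF DnS] regular_single[OF iS]])
    have regC: "regular ?\<Sigma>p Ccore"
      unfolding Ccore_def by (rule regular_concat[OF regular_lists[OF DnS] regular_TP[OF k2 uA]]) (use xA in simp)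
    have regCs: "regular ?\<Sigma>p Cset" unfolding Cset_def using regC by (simp add: regular_empty)
    have eq: "{pad \<alpha> \<beta> | \<alpha> \<beta>. \<alpha> \<in> L \<and> \<beta> \<in> L \<and> eqS ?R ?g (\<alpha> @ [i]) \<beta>} = (Acore \<union> Cset) \<inter> TopL \<inter> BotL"
    proof (intro set_eqI iffI)
      fix p assume "p \<in> {pad \<alpha> \<beta> | \<alpha> \<beta>. \<alpha> \<in> L \<and> \<beta> \<in> L \<and> eqS ?R ?g (\<alpha> @ [i]) \<beta>}"
      then obtain \<alpha> \<beta> where ab: "p = pad \<alpha> \<beta>" "\<alpha> \<in> L" "\<beta> \<in> L" "eqS ?R ?g (\<alpha> @ [i]) \<beta>" by auto
      have TB: "p \<in> TopL \<inter> BotL" unfolding TopL_def BotL_def using ab padL by simp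
      have "(\<alpha> @ [i], \<beta>) \<in> (S1 u x)\<^sup>*" using cong_to_irr ab(3,4) eqS_iff Lirr by blast
      then have cs: "\<beta> = \<alpha> @ [i] \<or> (\<exists>d w. \<alpha> = d @ w \<and> Pw u w \<and> \<beta> = d @ [x] \<and> i = last u \<and>
            (length w > length u - 1 \<longrightarrow> x = last u))"
        using red_inv[OF k2] ab(2) Lirr by blast
      have "p \<in> Acore \<union> Cset"
      proof (cases "\<beta> = \<alpha> @ [i]")
        case True
        have "p = diag \<alpha> @ [(None, Some i)]" using pad_app[of \<alpha> "[]" "[i]"] ab(1) True by simp
        moreover have "diag \<alpha> \<in> lists Dn"
        proof -
          have aL: "\<alpha> \<in> lists ?\<Sigma>" using ab(2) Lirr by simp
          show ?thesis unfolding Dn_def by (rule diag_in[OF aL])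
        qed
        ultimately show ?thesis unfolding Acore_def by blast
      next
        case False
        then obtain d w where dw: "\<alpha> = d @ w" "Pw u w" "\<beta> = d @ [x]" "i = last u"
          "length w > length u - 1 \<longrightarrow> x = last u" using cs by blast
        have "p = diag d @ pad w [x]" using pad_app ab(1) dw by simp
        moreover have "diag d \<in> lists Dn"
        proof -
          have aL: "d @ w \<in> lists ?\<Sigma>" using ab(2) Lirr dw(1) by simp
          then have "d \<in> lists ?\<Sigma>" by simp
          then show ?thesis unfolding Dn_def by (rule diag_in)
        qed
        moreover have "pad w [x] \<in> TP u x" unfolding TP_def using dw by blast
        ultimately have "p \<in> Ccore" unfolding Ccore_def by blast
        then show ?thesis unfolding Cset_def using dw(4) by simp
      qed
      then show "p \<in> (Acore \<union> Cset) \<inter> TopL \<inter> BotL" using TB by blast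
    next
      fix p assume p: "p \<in> (Acore \<union> Cset) \<inter> TopL \<inter> BotL"
      have tL: "trk1 p \<in> L" and bL: "trk2 p \<in> L" using p unfolding TopL_def BotL_def by auto
      show "p \<in> {pad \<alpha> \<beta> | \<alpha> \<beta>. \<alpha> \<in> L \<and> \<beta> \<in> L \<and> eqS ?R ?g (\<alpha> @ [i]) \<beta>}"
      proof (cases "p \<in> Acore")
        case True
        then obtain a where a: "p = a @ [(None, Some i)]" "a \<in> lists Dn" unfolding Acore_def by blast
        have ad: "a = diag (trk1 a)" using diag_lists a(2) unfolding Dn_def by blast
        have pp: "p = pad (trk1 a) (trk1 a @ [i])" using a(1) ad pad_app[of "trk1 a" "[]" "[i]"] by simp
        have t1: "trk1 p = trk1 a" using arg_cong[OF pp, of trk1] by simp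
        have t2: "trk2 p = trk1 a @ [i]" using arg_cong[OF pp, of trk2] by simp
        have e: "eqS ?R ?g (trk1 a @ [i]) (trk1 a @ [i])" using eqS_iff cong_refl by simp
        have l1: "trk1 a \<in> L" using tL t1 by simp
        have l2: "trk1 a @ [i] \<in> L" using bL t2 by simp
        show ?thesis using pp l1 l2 e by blast
      next
        case False
        then have "p \<in> Cset" using p by blast
        then have il: "i = last u" and "p \<in> Ccore" unfolding Cset_def by (auto split: if_splits)
        then obtain a t where at: "p = a @ t" "a \<in> lists Dn" "t \<in> TP u x" unfolding Ccore_def by blast
        obtain w where w: "t = pad w [x]" "Pw u w" "length w > length u - 1 \<longrightarrow> x = last u"
          using at(3) unfolding TP_def by blast
        have ad: "a = diag (trk1 a)" using diag_lists at(2) unfolding Dn_def by blast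
        let ?d = "trk1 a"
        have pp: "p = pad (?d @ w) (?d @ [x])" using at(1) ad w(1) pad_app[of ?d w "[x]"] by simp
        have tb: "trk1 p = ?d @ w" "trk2 p = ?d @ [x]"
          using arg_cong[OF pp, of trk1] arg_cong[OF pp, of trk2] by simp_all
        have "(?d @ w @ [last u], ?d @ [x]) \<in> (S1 u x)\<^sup>*" using red_to[OF k2 w(2,3)] by blast
        then have "(?d @ w @ [i], ?d @ [x]) \<in> cong_gen ?R" using rt_cong il by simp
        then have "eqS ?R ?g ((?d @ w) @ [i]) (?d @ [x])" using eqS_iff by simp
        moreover have "?d @ w \<in> L" "?d @ [x] \<in> L" using tL bL tb by simp_all
        ultimately show ?thesis using pp by blast
      qed
    qed
    show ?thesis unfolding eq
      by (rule regular_inter[OF regular_inter[OF regular_union[OF regA regCs] regTop] regBot])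
  qed
  have AS: "automatic_structure ?\<Sigma> ?R n ?g L"
    unfolding automatic_structure_def
  proof (intro conjI ballI)
    show "\<forall>i<n. [i] \<in> lists ?\<Sigma> \<and> [i] \<noteq> []" by simp
    show "regular ?\<Sigma> L" by (rule regL)
    show "L \<subseteq> lists ?\<Sigma> - {[]}" using Lirr by blast
  next
    fix w assume w: "w \<in> lists ?\<Sigma> - {[]}"
    obtain nf where nf: "nf \<in> NFs u x w" using NFs_nonempty[OF k2] by blast
    then have r: "(w, nf) \<in> (S1 u x)\<^sup>*" and ir: "irr u nf" unfolding NFs_def by auto
    have "nf \<in> L" using Lirr S1_lists[OF r] S1_ne[OF r] w ir xA by simp
    moreover have "(concat (map ?g nf), w) \<in> cong_gen ?R" using cong_sym[OF rt_cong[OF r]] by simp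
    ultimately show "\<exists>\<alpha>\<in>L. (concat (map ?g \<alpha>), w) \<in> cong_gen ?R" by blast
  next
    fix a assume "a \<in> {[]} \<union> {[i] | i. i < n}"
    then consider "a = []" | i where "a = [i]" "i < n" by blast
    then show "regular (pad_alph ?\<Sigma>) {pad \<alpha> \<beta> | \<alpha> \<beta>. \<alpha> \<in> L \<and> \<beta> \<in> L \<and> eqS ?R ?g (\<alpha> @ a) \<beta>}"
    proof cases
      case 1 then show ?thesis using reg0 eq0 by simp
    next
      case (2 i) then show ?thesis using regi by simp
    qed
  qed
  have prefeq: "{pad \<alpha> \<beta> | \<alpha> \<beta>. \<alpha> \<in> L \<and> \<beta> \<in> Pref L \<and> eqS ?R ?g \<alpha> \<beta>} =
                {pad \<alpha> \<beta> | \<alpha> \<beta>. \<alpha> \<in> L \<and> \<beta> \<in> L \<and> eqS ?R ?g (\<alpha> @ []) \<beta>}"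
  proof -
    have "\<beta> \<in> Pref L \<and> \<beta> \<noteq> [] \<longleftrightarrow> \<beta> \<in> L" for \<beta>
    proof
      assume h: "\<beta> \<in> Pref L \<and> \<beta> \<noteq> []"
      then obtain s where "\<beta> @ s \<in> L" unfolding Pref_def by blast
      then show "\<beta> \<in> L" using h Lirr irr_prefix[OF k2] by auto
    next
      assume "\<beta> \<in> L"
      then show "\<beta> \<in> Pref L \<and> \<beta> \<noteq> []" unfolding Pref_def using Lirr by force
    qed
    then have "(\<alpha> \<in> L \<and> \<beta> \<in> Pref L \<and> eqS ?R ?g \<alpha> \<beta>) \<longleftrightarrow> (\<alpha> \<in> L \<and> \<beta> \<in> L \<and> eqS ?R ?g (\<alpha> @ []) \<beta>)"
      for \<alpha> \<beta> using eqS_iff[of ?R \<alpha> \<beta>] by auto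
    then show ?thesis by (simp only:)
  qed
  show ?thesis unfolding prefix_automatic_def
  proof (intro exI conjI)
    show "automatic_structure ?\<Sigma> ?R n ?g L" by (rule AS)
    show "regular (pad_alph {0..<n}) {pad \<alpha> \<beta> | \<alpha> \<beta>. \<alpha> \<in> L \<and> \<beta> \<in> Pref L \<and> eqS ?R ?g \<alpha> \<beta>}"
      unfolding prefeq eq0 by (rule reg0)
  qed
qed

end


theorem theorem3p1p5:
  fixes n k :: nat and u :: "nat list" and x :: nat
  assumes "k \<ge> 2" and "length u = k" and "set u \<subseteq> alph n" and "x \<in> alph n"
    and "GS_basis_rel TYPE('k::field) (alph n) u [x]"
  shows "prefix_automatic (alph n) {(u, [x])}"
proof -
  have k2: "length u \<ge> 2" using assms(1,2) by simp
  have uA: "set u \<subseteq> {0..<n}" using assms(3) unfolding alph_def .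
  have xA: "x < n" using assms(4) unfolding alph_def by simp
  have GS: "GS_basis (alph n) {binom u [x] :: nat list \<Rightarrow> 'k}"
    using assms(5) unfolding GS_basis_rel_def .
  have uL: "u \<in> lists (alph n)" using assms(3) by auto
  have UN: "\<And>w. UNF u x w" by (rule all_UNF[OF k2 gs_ov[OF GS k2 uL]])
  show ?thesis unfolding alph_def using main_pa[OF k2 uA xA UN] .
qed

end
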